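(* Let $n\ge 1$ and consider the single-input single-output linear system \[ \dot x = A_0 x + b_y y + b_u u,\qquad y = c_0 x, \] with state $x(t)\in\mathbb{R}^n$, input $u$ and output $y$, where $c_0=[1,0,\dots,0]$, $A_0\in\mathbb{R}^{n\times n}$ is a strictly stable (Hurwitz) matrix in observable canonical form (i.e. $A_0$ has ones on the superdiagonal, first column equal to $-[\hat a_1,\dots,\hat a_n]^T$ and zeros elsewhere, so that its characteristic polynomial is $s^n+\hat a_1 s^{n-1}+\dots+\hat a_n$), and $b_y,b_u\in\mathbb{R}^n$ are constant vectors. Let $\theta_y(t),\theta_u(t)\in\mathbb{R}^n$ evolve according to \[ \dot\theta_y = A_0^T\theta_y + c_0^T y,\qquad \dot\theta_u = A_0^T\theta_u + c_0^T u, \] from arbitrary initial conditions. Let $C_0$ be the observability matrix of $(c_0,A_0)$, i.e. the matrix with rows $c_0, c_0A_0,\dots,c_0A_0^{n-1}$, and let $\Theta_y=[\theta_y,\ A_0^T\theta_y,\dots,(A_0^T)^{n-1}\theta_y]$ and $\Theta_u=[\theta_u,\ A_0^T\theta_u,\dots,(A_0^T)^{n-1}\theta_u]$ be the controllability matrices of $(A_0^T,\theta_y)$ and $(A_0^T,\theta_u)$. Define $E_y=C_0^{-1}\Theta_y^T$ and $E_u=C_0^{-1}\Theta_u^T$. Then $E_y b_y + E_u b_u$ converges to $x$ exponentially as $t\to\infty$.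
   Context: This setting arises from an $n$-th order strictly proper SISO plant with transfer function $\frac{b_1s^{n-1}+\dots+b_n}{s^n+a_1s^{n-1}+\dots+a_n}$ in observable canonical form, with $b_y=[\hat a_1-a_1,\dots,\hat a_n-a_n]^T$ and $b_u=[b_1,\dots,b_n]^T$; the lemma holds for any constant vectors $b_y,b_u$ as stated. *)

theory Defs
  imports Complex_Main "Jordan_Normal_Form.Char_Poly" "Jordan_Normal_Form.Gauss_Jordan_Elimination"
begin

text \<open>Observable canonical form: ones on the superdiagonal, first column equal to
  minus (ahat 0, ..., ahat (n-1)) (ahat i stands for the paper's coefficient with index i+1),
  zeros elsewhere.\<close>
definition obs_canon :: "nat \<Rightarrow> (nat \<Rightarrow> real) \<Rightarrow> real mat" where
  "obs_canon n ahat = mat n n (\<lambda>(i,j).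
      (if j = Suc i then 1 else 0) + (if j = 0 then - ahat i else 0))"

definition c0_vec :: "nat \<Rightarrow> real vec" where
  "c0_vec n = vec n (\<lambda>j. if j = 0 then 1 else 0)"

definition hurwitz :: "real mat \<Rightarrow> bool" where
  "hurwitz A \<longleftrightarrow> (\<forall>l. eigenvalue (map_mat complex_of_real A) l \<longrightarrow> Re l < 0)"

definition obsv_mat :: "nat \<Rightarrow> real vec \<Rightarrow> real mat \<Rightarrow> real mat" where
  "obsv_mat n c A = mat n n (\<lambda>(i,j). c \<bullet> col (A ^\<^sub>m i) j)"

definition ctrb_mat :: "nat \<Rightarrow> real mat \<Rightarrow> real vec \<Rightarrow> real mat" where
  "ctrb_mat n A b = mat n n (\<lambda>(i,j). ((A ^\<^sub>m j) *\<^sub>v b) $ i)"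

text \<open>Matrix inverse (the inverse exists for the observability matrix in question).\<close>
definition mat_inv :: "real mat \<Rightarrow> real mat" where
  "mat_inv A = the (mat_inverse A)"

end

theory Submission
  imports Defs "Jordan_Normal_Form.Schur_Decomposition"
begin

definition dec :: "(real \<Rightarrow> 'a::real_normed_vector) \<Rightarrow> bool" where
  "dec g \<longleftrightarrow> (\<exists>M \<alpha>. \<alpha> > 0 \<and> (\<forall>t\<ge>0. norm (g t) \<le> M * exp (- \<alpha> * t)))"

lemma dec_mono: "dec f \<Longrightarrow> (\<And>t. t \<ge> 0 \<Longrightarrow> norm (g t) \<le> norm (f t)) \<Longrightarrow> dec g"
  unfolding dec_def by (meson order_trans)

lemma dec_add:
  assumes "dec f" "dec g" shows "dec (\<lambda>t. f t + g t)"
proof -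
  obtain M1 a1 where 1: "a1 > 0" "\<forall>t\<ge>0. norm (f t) \<le> M1 * exp (- a1 * t)" using assms(1) dec_def by blast
  obtain M2 a2 where 2: "a2 > 0" "\<forall>t\<ge>0. norm (g t) \<le> M2 * exp (- a2 * t)" using assms(2) dec_def by blast
  have M1: "M1 \<ge> 0" using 1(2)[rule_format, of 0] by (simp) (meson norm_ge_zero order_trans)
  have M2: "M2 \<ge> 0" using 2(2)[rule_format, of 0] by (simp) (meson norm_ge_zero order_trans)
  define a where "a = min a1 a2"
  have "\<forall>t\<ge>0. norm (f t + g t) \<le> (M1 + M2) * exp (- a * t)"
  proof (intro allI impI)
    fix t :: real assume t: "t \<ge> 0"
    have e1: "exp (- a1 * t) \<le> exp (- a * t)" using t by (simp add: a_def mult_right_mono)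
    have e2: "exp (- a2 * t) \<le> exp (- a * t)" using t by (simp add: a_def mult_right_mono)
    have "norm (f t + g t) \<le> norm (f t) + norm (g t)" by (rule norm_triangle_ineq)
    also have "\<dots> \<le> M1 * exp (- a1 * t) + M2 * exp (- a2 * t)" using 1 2 t by (meson add_mono)
    also have "\<dots> \<le> M1 * exp (- a * t) + M2 * exp (- a * t)"
      using e1 e2 M1 M2 by (meson add_mono mult_left_mono)
    finally show "norm (f t + g t) \<le> (M1 + M2) * exp (- a * t)" by (simp add: algebra_simps)
  qed
  moreover have "a > 0" using 1 2 by (simp add: a_def)
  ultimately show ?thesis unfolding dec_def by blast
qed

lemma dec_zero: "dec (\<lambda>t. 0)"
  unfolding dec_def by (rule exI[of _ 0], rule exI[of _ 1]) simp

lemma dec_scale: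
  fixes f :: "real \<Rightarrow> 'a::real_normed_div_algebra"
  assumes "dec f" shows "dec (\<lambda>t. c * f t)"
proof -
  obtain M1 a1 where 1: "a1 > 0" "\<forall>t\<ge>0. norm (f t) \<le> M1 * exp (- a1 * t)" using assms(1) dec_def by blast
  have "\<forall>t\<ge>0. norm (c * f t) \<le> (norm c * M1) * exp (- a1 * t)"
    using 1 by (simp add: norm_mult mult.assoc mult_left_mono)
  with 1 show ?thesis unfolding dec_def by blast
qed

lemma dec_sum:
  assumes "finite I" "\<And>i. i \<in> I \<Longrightarrow> dec (f i)" shows "dec (\<lambda>t. \<Sum>i\<in>I. f i t)"
  using assms
proof (induction I rule: finite_induct)
  case empty then show ?case using dec_zero by simp
next
  case (insert x F)
  then show ?case by (simp add: dec_add)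
qed

lemma real_mv_bound:
  fixes f f' :: "real \<Rightarrow> real"
  assumes t: "t \<ge> 0"
    and d: "\<And>s. 0 \<le> s \<Longrightarrow> s \<le> t \<Longrightarrow> (f has_real_derivative f' s) (at s within {0..})"
    and b: "\<And>s. 0 \<le> s \<Longrightarrow> s \<le> t \<Longrightarrow> \<bar>f' s\<bar> \<le> B"
  shows "\<bar>f t - f 0\<bar> \<le> B * t"
proof -
  have cont: "continuous_on {0..t} f"
  proof -
    have "\<And>s. s \<in> {0..t} \<Longrightarrow> continuous (at s within {0..t}) f"
      using d by (meson DERIV_continuous DERIV_subset atLeastAtMost_iff atLeast_iff subsetI)
    then show ?thesis using continuous_on_eq_continuous_within by blast
  qed
  have dd: "\<And>s. 0 < s \<Longrightarrow> s < t \<Longrightarrow> (f has_real_derivative f' s) (at s)"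
  proof -
    fix s :: real assume s: "0 < s" "s < t"
    have "(f has_real_derivative f' s) (at s within {0<..})"
      using d[of s] s by (meson DERIV_subset greaterThan_iff atLeast_iff less_imp_le subsetI)
    then show "(f has_real_derivative f' s) (at s)"
      using s at_within_open[of s "{0<..}"] by simp
  qed
  have "(\<lambda>s. B * s - f s) 0 \<le> (\<lambda>s. B * s - f s) t"
  proof (rule DERIV_nonneg_imp_increasing_open[OF t])
    fix x :: real assume "0 < x" "x < t"
    then show "\<exists>y. ((\<lambda>s. B * s - f s) has_real_derivative y) (at x) \<and> 0 \<le> y"
      using dd b[of x] by (intro exI[of _ "B - f' x"]) (auto intro!: derivative_eq_intros simp: abs_le_iff)
  next
    show "continuous_on {0..t} (\<lambda>s. B * s - f s)" using cont by (intro continuous_intros)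
  qed
  moreover have "(\<lambda>s. B * s + f s) 0 \<le> (\<lambda>s. B * s + f s) t"
  proof (rule DERIV_nonneg_imp_increasing_open[OF t])
    fix x :: real assume "0 < x" "x < t"
    then show "\<exists>y. ((\<lambda>s. B * s + f s) has_real_derivative y) (at x) \<and> 0 \<le> y"
      using dd b[of x] by (intro exI[of _ "B + f' x"]) (auto intro!: derivative_eq_intros simp: abs_le_iff)
  next
    show "continuous_on {0..t} (\<lambda>s. B * s + f s)" using cont by (intro continuous_intros)
  qed
  ultimately show ?thesis by (simp add: abs_le_iff)
qed

lemma te_bound:
  fixes t d :: real assumes "t \<ge> 0" "d > 0"
  shows "t * exp (- d * t) \<le> (2 / d) * exp (- (d / 2) * t)"
proof -
  have "d * t / 2 \<le> exp (d * t / 2)" using exp_ge_add_one_self[of "d*t/2"] by linarith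
  then have "t \<le> (2 / d) * exp (d * t / 2)" using assms by (simp add: field_simps)
  then have "t * exp (- d * t) \<le> (2 / d) * exp (d * t / 2) * exp (- d * t)"
    by (intro mult_right_mono) auto
  also have "\<dots> = (2 / d) * exp (- (d / 2) * t)"
    by (simp add: mult.assoc exp_add[symmetric])
  finally show ?thesis .
qed

lemma dec_ode:
  fixes g h :: "real \<Rightarrow> complex" and l :: complex
  assumes l: "Re l < 0" and h: "dec h"
    and d: "\<And>t. t \<ge> 0 \<Longrightarrow> (g has_vector_derivative (l * g t + h t)) (at t within {0..})"
  shows "dec g"
proof -
  obtain M b where b: "b > 0" and hb: "\<And>t. t \<ge> 0 \<Longrightarrow> norm (h t) \<le> M * exp (- b * t)"
    using h dec_def by blast
  have M: "M \<ge> 0" using hb[of 0] by simp (meson norm_ge_zero order_trans)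
  define mu where "mu = - Re l"
  define dl where "dl = min mu b"
  have mu: "mu > 0" using l by (simp add: mu_def)
  have dl: "dl > 0" "dl \<le> mu" "dl \<le> b" using mu b by (auto simp: dl_def)
  define E where "E s = exp (- (l * of_real s))" for s :: real
  define phi where "phi s = E s * g s" for s
  have nE: "norm (E s) = exp (mu * s)" for s by (simp add: E_def mu_def)
  have dE: "(E has_vector_derivative (exp (- (l * of_real s)) * (- l))) (at s within {0..})" for s
    unfolding E_def
    by (rule has_vector_derivative_real_field) (auto intro!: derivative_eq_intros)
  have dphi: "(phi has_vector_derivative (E s * h s)) (at s within {0..})" if s: "s \<ge> 0" for s
  proof -
    have "(phi has_vector_derivative (E s * (l * g s + h s) + (exp (- (l * of_real s)) * (- l)) * g s)) (at s within {0..})"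
      unfolding phi_def by (rule has_vector_derivative_mult[OF dE d[OF s]])
    moreover have "E s * (l * g s + h s) + (exp (- (l * of_real s)) * (- l)) * g s = E s * h s"
      by (simp add: E_def algebra_simps)
    ultimately show ?thesis by simp
  qed
  have bnd: "\<forall>t\<ge>0. norm (g t) \<le> (norm (g 0) + 2 * M * (2 / dl)) * exp (- (dl / 2) * t)"
  proof (intro allI impI)
    fix t :: real assume t: "t \<ge> 0"
    define B where "B = M * exp ((mu - dl) * t)"
    have pb: "norm (E s * h s) \<le> B" if s: "0 \<le> s" "s \<le> t" for s
    proof -
      have "norm (E s * h s) = exp (mu * s) * norm (h s)" by (simp add: norm_mult nE)
      also have "\<dots> \<le> exp (mu * s) * (M * exp (- b * s))" using hb[of s] s by (simp add: mult_left_mono)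
      also have "\<dots> = M * exp (mu * s - b * s)" by (simp add: exp_diff exp_minus field_simps)
      also have "\<dots> \<le> M * exp ((mu - dl) * t)"
      proof -
        have "mu * s - b * s \<le> (mu - dl) * s" using dl s by (simp add: algebra_simps mult_right_mono)
        also have "\<dots> \<le> (mu - dl) * t" using dl s by (simp add: mult_left_mono)
        finally show ?thesis using M by (simp add: mult_left_mono)
      qed
      finally show ?thesis by (simp add: B_def)
    qed
    have dRe: "((\<lambda>s. Re (phi s)) has_real_derivative Re (E s * h s)) (at s within {0..})" if "s \<ge> 0" for s
      unfolding has_real_derivative_iff_has_vector_derivative
      by (rule bounded_linear.has_vector_derivative[OF bounded_linear_Re dphi[OF that]])
    have dIm: "((\<lambda>s. Im (phi s)) has_real_derivative Im (E s * h s)) (at s within {0..})" if "s \<ge> 0" for s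
      unfolding has_real_derivative_iff_has_vector_derivative
      by (rule bounded_linear.has_vector_derivative[OF bounded_linear_Im dphi[OF that]])
    have r1: "\<bar>Re (phi t) - Re (phi 0)\<bar> \<le> B * t"
    proof (rule real_mv_bound[OF t dRe])
      fix s :: real assume "0 \<le> s" "s \<le> t"
      then show "\<bar>Re (E s * h s)\<bar> \<le> B" using abs_Re_le_cmod[of "E s * h s"] pb[of s] by linarith
    qed simp
    have r2: "\<bar>Im (phi t) - Im (phi 0)\<bar> \<le> B * t"
    proof (rule real_mv_bound[OF t dIm])
      fix s :: real assume "0 \<le> s" "s \<le> t"
      then show "\<bar>Im (E s * h s)\<bar> \<le> B" using abs_Im_le_cmod[of "E s * h s"] pb[of s] by linarith
    qed simp
    have "norm (phi t - phi 0) \<le> 2 * B * t" using cmod_le[of "phi t - phi 0"] r1 r2 by simp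
    moreover have "phi 0 = g 0" by (simp add: phi_def E_def)
    ultimately have np: "norm (phi t) \<le> norm (g 0) + 2 * B * t"
      by (metis add.commute norm_triangle_ineq2 order_trans diff_le_eq)
    have gt: "g t = exp (l * of_real t) * phi t" by (simp add: phi_def E_def exp_minus field_simps)
    have "norm (g t) = exp (- mu * t) * norm (phi t)" by (simp add: gt norm_mult mu_def)
    also have "\<dots> \<le> exp (- mu * t) * (norm (g 0) + 2 * B * t)" using np by (simp add: mult_left_mono)
    also have "\<dots> = norm (g 0) * exp (- mu * t) + 2 * M * (t * exp (- dl * t))"
      by (simp add: B_def algebra_simps exp_add[symmetric])
    also have "\<dots> \<le> norm (g 0) * exp (- (dl / 2) * t) + 2 * M * ((2 / dl) * exp (- (dl / 2) * t))"
    proof (rule add_mono)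
      show "norm (g 0) * exp (- mu * t) \<le> norm (g 0) * exp (- (dl / 2) * t)"
      proof -
        have "dl / 2 * t \<le> mu * t" using dl t by (intro mult_right_mono) auto
        then show ?thesis by (intro mult_left_mono) auto
      qed
      show "2 * M * (t * exp (- dl * t)) \<le> 2 * M * ((2 / dl) * exp (- (dl / 2) * t))"
        using M te_bound[OF t dl(1)] by (intro mult_left_mono) auto
    qed
    finally show "norm (g t) \<le> (norm (g 0) + 2 * M * (2 / dl)) * exp (- (dl / 2) * t)"
      by (simp add: algebra_simps)
  qed
  moreover have "dl / 2 > 0" using dl by simp
  ultimately show ?thesis unfolding dec_def by blast
qed

lemma pow_comm: "(A :: 'a :: semiring_1 mat) \<in> carrier_mat n n \<Longrightarrow> A ^\<^sub>m k * A = A * A ^\<^sub>m k"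
proof (induction k)
  case 0 then show ?case by simp
next
  case (Suc k)
  have "A ^\<^sub>m Suc k * A = (A ^\<^sub>m k * A) * A" by simp
  also have "\<dots> = (A * A ^\<^sub>m k) * A" using Suc by simp
  also have "\<dots> = A * (A ^\<^sub>m k * A)" using Suc.prems by (meson assoc_mult_mat pow_carrier_mat)
  finally show ?case by simp
qed

lemma transpose_pow: "(A :: 'a :: comm_semiring_1 mat) \<in> carrier_mat n n \<Longrightarrow>
   transpose_mat (A ^\<^sub>m k) = (transpose_mat A) ^\<^sub>m k"
proof (induction k)
  case 0 then show ?case by simp
next
  case (Suc k)
  have "transpose_mat (A ^\<^sub>m Suc k) = transpose_mat (A * A ^\<^sub>m k)" using pow_comm[OF Suc.prems] by simp
  also have "\<dots> = transpose_mat (A ^\<^sub>m k) * transpose_mat A"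
    using Suc.prems by (intro transpose_mult) auto
  finally show ?case using Suc by simp
qed

fun psum :: "nat \<Rightarrow> (nat \<Rightarrow> 'a::comm_ring_1) \<Rightarrow> 'a mat \<Rightarrow> nat list \<Rightarrow> 'a mat" where
  "psum n a F [] = 0\<^sub>m n n"
| "psum n a F (k # ks) = a k \<cdot>\<^sub>m (F ^\<^sub>m k) + psum n a F ks"

lemma psum_carrier: "F \<in> carrier_mat n n \<Longrightarrow> psum n a F ks \<in> carrier_mat n n"
  by (induction ks) auto

lemma psum_comm: assumes F: "F \<in> carrier_mat n n"
  shows "psum n a F ks * F = F * psum n a F ks"
proof (induction ks)
  case Nil then show ?case using F by simp
next
  case (Cons k ks)
  have P: "psum n a F ks \<in> carrier_mat n n" using psum_carrier[OF F] .
  have "psum n a F (k # ks) * F = a k \<cdot>\<^sub>m (F ^\<^sub>m k * F) + psum n a F ks * F"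
    using F P by (simp add: add_mult_distrib_mat[of _ n n] mult_smult_assoc_mat[of _ n n])
  also have "\<dots> = a k \<cdot>\<^sub>m (F * F ^\<^sub>m k) + F * psum n a F ks"
    using Cons pow_comm[OF F] by simp
  also have "\<dots> = F * (a k \<cdot>\<^sub>m F ^\<^sub>m k) + F * psum n a F ks"
    using mult_smult_distrib[of F n n "F ^\<^sub>m k" n "a k"] F by simp
  also have "\<dots> = F * psum n a F (k # ks)"
    using F P by (simp add: mult_add_distrib_mat[of F n n _ n])
  finally show ?case .
qed

lemma psum_comm_pow: assumes F: "F \<in> carrier_mat n n"
  shows "psum n a F ks * F ^\<^sub>m j = F ^\<^sub>m j * psum n a F ks"
proof (induction j)
  case 0
  have P: "psum n a F ks \<in> carrier_mat n n" using psum_carrier[OF F] .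
  then show ?case using F by (simp add: right_mult_one_mat left_mult_one_mat)
next
  case (Suc j)
  have P: "psum n a F ks \<in> carrier_mat n n" using psum_carrier[OF F] .
  have "psum n a F ks * F ^\<^sub>m Suc j = (psum n a F ks * F ^\<^sub>m j) * F"
    using F P by (simp del: assoc_mult_mat add: assoc_mult_mat[of _ n n _ n _ n, symmetric])
  also have "\<dots> = (F ^\<^sub>m j * psum n a F ks) * F" using Suc by simp
  also have "\<dots> = F ^\<^sub>m j * (psum n a F ks * F)" using F P by (meson assoc_mult_mat pow_carrier_mat)
  also have "\<dots> = F ^\<^sub>m j * (F * psum n a F ks)" using psum_comm[OF F] by simp
  also have "\<dots> = F ^\<^sub>m Suc j * psum n a F ks"
    using F P by (simp del: assoc_mult_mat add: assoc_mult_mat[of _ n n _ n _ n, symmetric])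
  finally show ?case .
qed

lemma psum_vec: assumes F: "F \<in> carrier_mat n n" and c: "c \<in> carrier_vec n" and i: "i < n"
  shows "(psum n a F ks *\<^sub>v c) $ i = (\<Sum>k\<leftarrow>ks. a k * (F ^\<^sub>m k *\<^sub>v c) $ i)"
proof (induction ks)
  case Nil then show ?case using i c by simp
next
  case (Cons k ks)
  have P: "psum n a F ks \<in> carrier_mat n n" using psum_carrier[OF F] .
  have "psum n a F (k # ks) *\<^sub>v c = (a k \<cdot>\<^sub>m F ^\<^sub>m k) *\<^sub>v c + psum n a F ks *\<^sub>v c"
    using F P c by (simp add: add_mult_distrib_mat_vec[of _ n n])
  moreover have "((a k \<cdot>\<^sub>m F ^\<^sub>m k) *\<^sub>v c) $ i = a k * (F ^\<^sub>m k *\<^sub>v c) $ i"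
    using i F c by simp
  ultimately show ?case using Cons i F c P by simp
qed

lemma ctrb_factor:
  fixes F :: "real mat"
  assumes F: "F \<in> carrier_mat n n" and c: "c \<in> carrier_vec n" and th: "th \<in> carrier_vec n"
    and H: "H \<in> carrier_mat n n" and GH: "ctrb_mat n F c * H = 1\<^sub>m n"
  defines "Q \<equiv> psum n (\<lambda>k. (H *\<^sub>v th) $ k) F [0..<n]"
  shows "ctrb_mat n F th = Q * ctrb_mat n F c"
proof -
  let ?G = "ctrb_mat n F c"
  have G: "?G \<in> carrier_mat n n" by (simp add: ctrb_mat_def)
  have Q: "Q \<in> carrier_mat n n" unfolding Q_def by (rule psum_carrier[OF F])
  have Qc: "Q *\<^sub>v c = th"
  proof -
    have "Q *\<^sub>v c = ?G *\<^sub>v (H *\<^sub>v th)"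
    proof (rule eq_vecI)
      fix i assume "i < dim_vec (?G *\<^sub>v (H *\<^sub>v th))"
      then have i: "i < n" using G by simp
      have "(Q *\<^sub>v c) $ i = (\<Sum>k\<leftarrow>[0..<n]. (H *\<^sub>v th) $ k * (F ^\<^sub>m k *\<^sub>v c) $ i)"
        unfolding Q_def by (rule psum_vec[OF F c i])
      also have "\<dots> = (\<Sum>k<n. (H *\<^sub>v th) $ k * (F ^\<^sub>m k *\<^sub>v c) $ i)"
        by (simp add: sum_list_sum_nth atLeast0LessThan)
      also have "\<dots> = (?G *\<^sub>v (H *\<^sub>v th)) $ i"
        using i H th by (simp add: ctrb_mat_def scalar_prod_def atLeast0LessThan mult.commute)
      finally show "(Q *\<^sub>v c) $ i = (?G *\<^sub>v (H *\<^sub>v th)) $ i" .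
    qed (use Q G c in simp)
    also have "\<dots> = (?G * H) *\<^sub>v th" using G H th by simp
    also have "\<dots> = th" using GH th by simp
    finally show ?thesis .
  qed
  show ?thesis
  proof (rule eq_matI)
    fix i j assume ij: "i < dim_row (Q * ?G)" "j < dim_col (Q * ?G)"
    then have i: "i < n" and j: "j < n" using Q G by auto
    have colG: "col ?G j = F ^\<^sub>m j *\<^sub>v c" using j F by (auto simp: ctrb_mat_def)
    have "(Q * ?G) $$ (i, j) = (Q *\<^sub>v (F ^\<^sub>m j *\<^sub>v c)) $ i" using i j Q G colG by simp
    also have "\<dots> = ((Q * F ^\<^sub>m j) *\<^sub>v c) $ i" using assoc_mult_mat_vec[of Q n n "F ^\<^sub>m j" n c] Q F c by simp
    also have "\<dots> = ((F ^\<^sub>m j * Q) *\<^sub>v c) $ i" unfolding Q_def using psum_comm_pow[OF F] by simp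
    also have "\<dots> = (F ^\<^sub>m j *\<^sub>v th) $ i" using assoc_mult_mat_vec[of "F ^\<^sub>m j" n n Q n c] Q F c Qc by simp
    finally show "ctrb_mat n F th $$ (i, j) = (Q * ?G) $$ (i, j)" using i j by (simp add: ctrb_mat_def)
  qed (use Q G in \<open>auto simp: ctrb_mat_def\<close>)
qed

lemma A0_carrier: "obs_canon n ahat \<in> carrier_mat n n" by (simp add: obs_canon_def)
lemma A0_dims[simp]: "dim_row (obs_canon n ahat) = n" "dim_col (obs_canon n ahat) = n"
  by (simp_all add: obs_canon_def)
lemma c0_carrier: "c0_vec n \<in> carrier_vec n" by (simp add: c0_vec_def)

lemma obsv_transpose:
  assumes A: "(A :: real mat) \<in> carrier_mat n n" and c: "c \<in> carrier_vec n"
  shows "transpose_mat (obsv_mat n c A) = ctrb_mat n (transpose_mat A) c"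
proof (rule eq_matI)
  fix i j assume "i < dim_row (ctrb_mat n (transpose_mat A) c)" "j < dim_col (ctrb_mat n (transpose_mat A) c)"
  then have i: "i < n" and j: "j < n" by (auto simp: ctrb_mat_def)
  have "ctrb_mat n (transpose_mat A) c $$ (i, j) = row (transpose_mat (A ^\<^sub>m j)) i \<bullet> c"
    using i j A by (simp add: ctrb_mat_def transpose_pow[OF A, symmetric])
  also have "\<dots> = c \<bullet> col (A ^\<^sub>m j) i" using i A c by (simp add: comm_scalar_prod[of _ n])
  finally show "transpose_mat (obsv_mat n c A) $$ (i, j) = ctrb_mat n (transpose_mat A) c $$ (i, j)"
    using i j by (simp add: obsv_mat_def)
qed (auto simp: obsv_mat_def ctrb_mat_def)

lemma obsv_entry: assumes "i < n" "j < n"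
  shows "obsv_mat n (c0_vec n) (obs_canon n ahat) $$ (i, j) = (obs_canon n ahat ^\<^sub>m i) $$ (0, j)"
proof -
  let ?M = "obs_canon n ahat ^\<^sub>m i"
  have M: "?M \<in> carrier_mat n n" using A0_carrier by simp
  have "c0_vec n \<bullet> col ?M j = (\<Sum>k\<in>{0..<n}. (if k = 0 then 1 else 0) * ?M $$ (k, j))"
    using M assms by (auto simp: scalar_prod_def c0_vec_def intro!: sum.cong)
  also have "\<dots> = ?M $$ (0, j)" using assms by (simp add: sum.remove[of _ 0])
  finally show ?thesis using assms by (simp add: obsv_mat_def)
qed

lemma A0_pow_row0:
  assumes "i \<le> j" "j < n"
  shows "(obs_canon n ahat ^\<^sub>m i) $$ (0, j) = (if j = i then 1 else 0)"
  using assms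
proof (induction i arbitrary: j)
  case 0 then show ?case by (simp add: obs_canon_def)
next
  case (Suc i)
  let ?A = "obs_canon n ahat"
  have j1: "j \<ge> 1" using Suc by simp
  have "(?A ^\<^sub>m Suc i) $$ (0, j) = (\<Sum>l\<in>{0..<n}. (?A ^\<^sub>m i) $$ (0, l) * ?A $$ (l, j))"
    using Suc.prems A0_carrier[of n ahat] by (simp add: scalar_prod_def)
  also have "\<dots> = (\<Sum>l\<in>{0..<n}. if l = j - 1 then (?A ^\<^sub>m i) $$ (0, l) else 0)"
    using j1 Suc.prems by (intro sum.cong) (auto simp: obs_canon_def)
  also have "\<dots> = (?A ^\<^sub>m i) $$ (0, j - 1)" using Suc.prems by simp
  also have "\<dots> = (if j - 1 = i then 1 else 0)" using Suc by simp
  finally show ?case using j1 by auto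
qed

lemma obsv_inv:
  fixes n :: nat and ahat :: "nat \<Rightarrow> real"
  assumes n: "n \<ge> 1"
  defines "C \<equiv> obsv_mat n (c0_vec n) (obs_canon n ahat)"
  shows "mat_inv C \<in> carrier_mat n n \<and> C * mat_inv C = 1\<^sub>m n \<and> mat_inv C * C = 1\<^sub>m n"
proof -
  have Cc: "C \<in> carrier_mat n n" by (simp add: C_def obsv_mat_def)
  have low: "\<And>i j. i < j \<Longrightarrow> j < n \<Longrightarrow> C $$ (i, j) = 0"
    unfolding C_def using obsv_entry A0_pow_row0 by simp
  have "det C = prod_list (diag_mat C)" by (rule det_lower_triangular[OF low Cc])
  also have "\<dots> = 1" unfolding prod_list_diag_prod using Cc
    by (intro prod.neutral) (auto simp: C_def obsv_entry A0_pow_row0)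
  finally have "det C \<noteq> 0" by simp
  from det_non_zero_imp_unit[OF Cc this] have U: "C \<in> Units (ring_mat TYPE(real) n undefined)" .
  have "mat_inverse C \<noteq> None" using mat_inverse(1)[OF Cc, of undefined] U by blast
  then obtain B where "mat_inverse C = Some B" by auto
  with mat_inverse(2)[OF Cc] show ?thesis by (simp add: mat_inv_def)
qed

lemma key_comm:
  fixes n :: nat and ahat :: "nat \<Rightarrow> real"
  assumes n: "n \<ge> 1" and th: "th \<in> carrier_vec n"
  defines "A0 \<equiv> obs_canon n ahat" and "C \<equiv> obsv_mat n (c0_vec n) (obs_canon n ahat)"
  shows "\<exists>R. R \<in> carrier_mat n n \<and> mat_inv C * transpose_mat (ctrb_mat n (transpose_mat A0) th) = R
            \<and> R * A0 = A0 * R"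
proof -
  define Ci where "Ci = mat_inv C"
  have Ci: "Ci \<in> carrier_mat n n" "C * Ci = 1\<^sub>m n" "Ci * C = 1\<^sub>m n"
    using obsv_inv[OF n] by (auto simp: Ci_def C_def)
  have A: "A0 \<in> carrier_mat n n" by (simp add: A0_def A0_carrier)
  have Cc: "C \<in> carrier_mat n n" by (simp add: C_def obsv_mat_def)
  define F where "F = transpose_mat A0"
  have F: "F \<in> carrier_mat n n" using A by (simp add: F_def)
  have G: "ctrb_mat n F (c0_vec n) = transpose_mat C"
    unfolding F_def C_def A0_def by (rule obsv_transpose[symmetric, OF A0_carrier c0_carrier])
  have GH: "ctrb_mat n F (c0_vec n) * transpose_mat Ci = 1\<^sub>m n"
    unfolding G using Cc Ci by (simp add: transpose_mult[symmetric])
  define Q where "Q = psum n (\<lambda>k. (transpose_mat Ci *\<^sub>v th) $ k) F [0..<n]"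
  have Q: "Q \<in> carrier_mat n n" unfolding Q_def by (rule psum_carrier[OF F])
  have fac: "ctrb_mat n F th = Q * transpose_mat C"
    using ctrb_factor[OF F c0_carrier th _ GH] Ci G by (simp add: Q_def)
  have "transpose_mat (ctrb_mat n F th) = C * transpose_mat Q"
    unfolding fac using Q Cc by (simp add: transpose_mult)
  then have "Ci * transpose_mat (ctrb_mat n F th) = (Ci * C) * transpose_mat Q"
    using assoc_mult_mat[of Ci n n C n "transpose_mat Q" n] Ci Cc Q by simp
  also have "\<dots> = transpose_mat Q" using Ci Q by simp
  finally have e: "Ci * transpose_mat (ctrb_mat n F th) = transpose_mat Q" .
  have "transpose_mat Q * A0 = transpose_mat (F * Q)"
    using F Q A by (simp add: transpose_mult F_def)
  also have "\<dots> = transpose_mat (Q * F)" using psum_comm[OF F] by (simp add: Q_def)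
  also have "\<dots> = A0 * transpose_mat Q" using F Q A by (simp add: transpose_mult F_def)
  finally show ?thesis using e Q by (auto simp: Ci_def F_def)
qed

lemma hurwitz_stable:
  fixes A :: "real mat" and e :: "real \<Rightarrow> real vec"
  assumes A: "A \<in> carrier_mat n n" and hur: "hurwitz A"
    and edim: "\<And>t. t \<ge> 0 \<Longrightarrow> e t \<in> carrier_vec n"
    and ed: "\<And>t i. t \<ge> 0 \<Longrightarrow> i < n \<Longrightarrow>
        ((\<lambda>s. e s $ i) has_real_derivative (A *\<^sub>v e t) $ i) (at t within {0..})"
  shows "\<exists>M \<alpha>. \<alpha> > 0 \<and> (\<forall>t\<ge>0. \<forall>i<n. \<bar>e t $ i\<bar> \<le> M * exp (- \<alpha> * t))"
proof -
  define Ac where "Ac = map_mat complex_of_real A"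
  have Ac: "Ac \<in> carrier_mat n n" using A by (simp add: Ac_def)
  obtain es where cp: "char_poly Ac = (\<Prod>a\<leftarrow>es. [:- a, 1:])"
    using char_poly_factorized[OF Ac] by auto
  obtain B P Q where sd: "schur_decomposition Ac es = (B, P, Q)"
    by (cases "schur_decomposition Ac es") auto
  from schur_decomposition[OF Ac cp sd]
  have sim: "similar_mat_wit Ac B P Q" and ut: "upper_triangular B" and dg: "diag_mat B = es" by auto
  from sim Ac have Bc: "B \<in> carrier_mat n n" and Pc: "P \<in> carrier_mat n n" and Qc: "Q \<in> carrier_mat n n"
    and PQ: "P * Q = 1\<^sub>m n" and QP: "Q * P = 1\<^sub>m n" and AcPBQ: "Ac = P * B * Q"
    unfolding similar_mat_wit_def Let_def by auto
  have eig: "Re (B $$ (k, k)) < 0" if k: "k < n" for k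
  proof -
    have "B $$ (k, k) \<in> set es" using dg k Bc by (auto simp: diag_mat_def)
    then have "poly (char_poly Ac) (B $$ (k, k)) = 0"
      unfolding cp by (auto simp: poly_prod_list_zero_iff)
    then have "eigenvalue Ac (B $$ (k, k))" using eigenvalue_root_char_poly[OF Ac] by simp
    then show ?thesis using hur by (simp add: hurwitz_def Ac_def)
  qed
  define ec where "ec t = map_vec complex_of_real (e t)" for t
  define f where "f k t = (\<Sum>j<n. Q $$ (k, j) * complex_of_real (e t $ j))" for k t
  have fQ: "f k t = (Q *\<^sub>v ec t) $ k" if "t \<ge> 0" "k < n" for k t
    using that Qc edim[OF that(1)] by (simp add: f_def ec_def scalar_prod_def atLeast0LessThan)
  have QAc: "Q * Ac = B * Q"
  proof -
    have "Q * Ac = (Q * (P * B)) * Q" unfolding AcPBQ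
      by (rule assoc_mult_mat[symmetric]) (use Qc Pc Bc in auto)
    also have "\<dots> = ((Q * P) * B) * Q" using assoc_mult_mat[of Q n n P n B n] Qc Pc Bc by simp
    also have "\<dots> = B * Q" using QP Bc by simp
    finally show ?thesis .
  qed
  have fd: "(f k has_vector_derivative (\<Sum>l<n. B $$ (k, l) * f l t)) (at t within {0..})"
    if t: "t \<ge> 0" and k: "k < n" for k t
  proof -
    have "(f k has_vector_derivative (\<Sum>j<n. Q $$ (k, j) * complex_of_real ((A *\<^sub>v e t) $ j))) (at t within {0..})"
      unfolding f_def
      by (intro has_vector_derivative_sum has_vector_derivative_mult_right has_vector_derivative_of_real ed[OF t]) simp
    moreover have "(\<Sum>j<n. Q $$ (k, j) * complex_of_real ((A *\<^sub>v e t) $ j)) = (\<Sum>l<n. B $$ (k, l) * f l t)"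
    proof -
      have ev: "map_vec complex_of_real (A *\<^sub>v e t) = Ac *\<^sub>v ec t"
        unfolding Ac_def ec_def by (rule of_real_hom.mult_mat_vec_hom[OF A edim[OF t]])
      have "(\<Sum>j<n. Q $$ (k, j) * complex_of_real ((A *\<^sub>v e t) $ j)) = (Q *\<^sub>v map_vec complex_of_real (A *\<^sub>v e t)) $ k"
        using k Qc A by (simp add: scalar_prod_def atLeast0LessThan)
      also have "\<dots> = ((Q * Ac) *\<^sub>v ec t) $ k" unfolding ev using Qc Ac edim[OF t] by (simp add: ec_def)
      also have "\<dots> = (B *\<^sub>v (Q *\<^sub>v ec t)) $ k" unfolding QAc using Bc Qc edim[OF t] by (simp add: ec_def)
      also have "\<dots> = (\<Sum>l<n. B $$ (k, l) * f l t)"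
        using k Bc Qc edim[OF t] fQ[OF t] by (simp add: scalar_prod_def atLeast0LessThan ec_def)
      finally show ?thesis .
    qed
    ultimately show ?thesis by simp
  qed
  have fdec: "dec (f k)" if "k < n" for k
    using that
  proof (induction "n - k" arbitrary: k rule: less_induct)
    case less
    have IH: "dec (f l)" if "k < l" "l < n" for l
      using less.hyps[of l] that by simp
    define h where "h t = (\<Sum>l\<in>{k<..<n}. B $$ (k, l) * f l t)" for t
    have hdec: "dec h" unfolding h_def by (intro dec_sum dec_scale IH) auto
    have split: "(\<Sum>l<n. B $$ (k, l) * f l t) = B $$ (k, k) * f k t + h t" for t
    proof -
      have U: "{..<n} = {..<k} \<union> ({k} \<union> {k<..<n})" using less.prems by auto
      have "(\<Sum>l<n. B $$ (k, l) * f l t) = (\<Sum>l\<in>{..<k} \<union> ({k} \<union> {k<..<n}). B $$ (k, l) * f l t)"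
        by (subst U) (rule refl)
      also have "\<dots> = (\<Sum>l\<in>{..<k}. B $$ (k, l) * f l t) + (\<Sum>l\<in>{k} \<union> {k<..<n}. B $$ (k, l) * f l t)"
        by (rule sum.union_disjoint) auto
      also have "(\<Sum>l\<in>{k} \<union> {k<..<n}. B $$ (k, l) * f l t) = B $$ (k, k) * f k t + h t"
        by (subst sum.union_disjoint) (auto simp: h_def)
      finally have "(\<Sum>l<n. B $$ (k, l) * f l t) = (\<Sum>l\<in>{..<k}. B $$ (k, l) * f l t)
          + (B $$ (k, k) * f k t + h t)" .
      moreover have "(\<Sum>l\<in>{..<k}. B $$ (k, l) * f l t) = 0"
        using ut less.prems Bc by (auto simp: upper_triangular_def)
      ultimately show ?thesis by simp
    qed
    show ?case
    proof (rule dec_ode[OF eig[OF less.prems] hdec])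
      fix t :: real assume "t \<ge> 0"
      from fd[OF this less.prems] show "(f k has_vector_derivative B $$ (k, k) * f k t + h t) (at t within {0..})"
        unfolding split .
    qed
  qed
  have edec: "dec (\<lambda>t. \<bar>e t $ j\<bar>)" if j: "j < n" for j
  proof (rule dec_mono)
    show "dec (\<lambda>t. \<Sum>k<n. P $$ (j, k) * f k t)" by (intro dec_sum dec_scale fdec) auto
    fix t :: real assume t: "t \<ge> 0"
    have "complex_of_real (e t $ j) = (P *\<^sub>v (Q *\<^sub>v ec t)) $ j"
    proof -
      have "(P *\<^sub>v (Q *\<^sub>v ec t)) = (P * Q) *\<^sub>v ec t" using Pc Qc edim[OF t] by (simp add: ec_def)
      also have "\<dots> = ec t" using PQ edim[OF t] by (simp add: ec_def)
      finally show ?thesis using j edim[OF t] by (simp add: ec_def)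
    qed
    also have "\<dots> = (\<Sum>k<n. P $$ (j, k) * f k t)"
      using j Pc Qc edim[OF t] fQ[OF t] by (simp add: scalar_prod_def atLeast0LessThan ec_def)
    finally show "norm \<bar>e t $ j\<bar> \<le> norm (\<Sum>k<n. P $$ (j, k) * f k t)"
      by (metis norm_of_real order_refl real_norm_def abs_abs)
  qed
  have "dec (\<lambda>t. \<Sum>j<n. \<bar>e t $ j\<bar>)" by (intro dec_sum edec) auto
  then obtain M \<alpha> where "\<alpha> > 0" and Mb: "\<And>t. t \<ge> 0 \<Longrightarrow> norm (\<Sum>j<n. \<bar>e t $ j\<bar>) \<le> M * exp (- \<alpha> * t)"
    unfolding dec_def by blast
  moreover have "\<bar>e t $ i\<bar> \<le> M * exp (- \<alpha> * t)" if "t \<ge> 0" "i < n" for t i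
  proof -
    have "\<bar>e t $ i\<bar> \<le> (\<Sum>j<n. \<bar>e t $ j\<bar>)"
      using that by (intro member_le_sum) auto
    also have "\<dots> = norm (\<Sum>j<n. \<bar>e t $ j\<bar>)" by (simp add: sum_nonneg)
    finally show ?thesis using Mb[OF that(1)] by linarith
  qed
  ultimately show ?thesis by blast
qed

lemma TS: assumes M: "(M :: real mat) \<in> carrier_mat n n" and v: "v \<in> carrier_vec n" and w: "w \<in> carrier_vec n"
  shows "(transpose_mat M *\<^sub>v v) \<bullet> w = (M *\<^sub>v w) \<bullet> v"
proof -
  have "(transpose_mat M *\<^sub>v v) \<bullet> w = (\<Sum>l<n. (\<Sum>m<n. M $$ (m, l) * v $ m) * w $ l)"
    using M v w by (simp add: scalar_prod_def atLeast0LessThan)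
  also have "\<dots> = (\<Sum>l<n. \<Sum>m<n. M $$ (m, l) * v $ m * w $ l)" by (simp add: sum_distrib_right)
  also have "\<dots> = (\<Sum>m<n. \<Sum>l<n. M $$ (m, l) * v $ m * w $ l)" by (rule sum.swap)
  also have "\<dots> = (\<Sum>m<n. (\<Sum>l<n. M $$ (m, l) * w $ l) * v $ m)"
    by (simp add: sum_distrib_left sum_distrib_right mult.commute mult.left_commute)
  also have "\<dots> = (M *\<^sub>v w) \<bullet> v"
    using M v w by (simp add: scalar_prod_def atLeast0LessThan)
  finally show ?thesis .
qed

definition Lmat :: "nat \<Rightarrow> real mat \<Rightarrow> real vec \<Rightarrow> real mat" where
  "Lmat n A b = mat n n (\<lambda>(j, m). (A ^\<^sub>m j *\<^sub>v b) $ m)"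

lemma Lmat_carrier[simp]: "Lmat n A b \<in> carrier_mat n n" by (simp add: Lmat_def)

lemma LIN: assumes A: "(A :: real mat) \<in> carrier_mat n n" and th: "th \<in> carrier_vec n" and b: "b \<in> carrier_vec n"
  shows "transpose_mat (ctrb_mat n (transpose_mat A) th) *\<^sub>v b = Lmat n A b *\<^sub>v th"
proof (rule eq_vecI)
  fix j assume "j < dim_vec (Lmat n A b *\<^sub>v th)"
  then have j: "j < n" by (simp add: Lmat_def)
  have "(transpose_mat (ctrb_mat n (transpose_mat A) th) *\<^sub>v b) $ j = (transpose_mat (A ^\<^sub>m j) *\<^sub>v th) \<bullet> b"
    using j A th b by (simp add: ctrb_mat_def transpose_pow[OF A] scalar_prod_def atLeast0LessThan)
  also have "\<dots> = (A ^\<^sub>m j *\<^sub>v b) \<bullet> th" using TS[of "A ^\<^sub>m j" n th b] A th b by simp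
  also have "\<dots> = (Lmat n A b *\<^sub>v th) $ j"
    using j A th b by (simp add: Lmat_def scalar_prod_def atLeast0LessThan)
  finally show "(transpose_mat (ctrb_mat n (transpose_mat A) th) *\<^sub>v b) $ j = (Lmat n A b *\<^sub>v th) $ j" .
qed (simp add: ctrb_mat_def Lmat_def)

lemma VEC:
  fixes n :: nat and ahat :: "nat \<Rightarrow> real"
  assumes n: "n \<ge> 1" and th: "th \<in> carrier_vec n" and b: "b \<in> carrier_vec n"
  shows "(mat_inv (obsv_mat n (c0_vec n) (obs_canon n ahat)) * Lmat n (obs_canon n ahat) b) *\<^sub>v
           (transpose_mat (obs_canon n ahat) *\<^sub>v th + yv \<cdot>\<^sub>v c0_vec n)
       = obs_canon n ahat *\<^sub>v ((mat_inv (obsv_mat n (c0_vec n) (obs_canon n ahat)) *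
           transpose_mat (ctrb_mat n (transpose_mat (obs_canon n ahat)) th)) *\<^sub>v b) + yv \<cdot>\<^sub>v b"
proof -
  define A0 where "A0 = obs_canon n ahat"
  define c0 where "c0 = c0_vec n"
  define C where "C = obsv_mat n c0 A0"
  define Ci where "Ci = mat_inv C"
  define L where "L = Lmat n A0 b"
  define K where "K = transpose_mat (ctrb_mat n (transpose_mat A0) th)"
  have A: "A0 \<in> carrier_mat n n" by (simp add: A0_def A0_carrier)
  have c: "c0 \<in> carrier_vec n" by (simp add: c0_def c0_carrier)
  have Cc: "C \<in> carrier_mat n n" by (simp add: C_def obsv_mat_def)
  have Ci: "Ci \<in> carrier_mat n n" "C * Ci = 1\<^sub>m n" "Ci * C = 1\<^sub>m n"
    using obsv_inv[OF n, of ahat] by (auto simp: Ci_def C_def A0_def c0_def)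
  obtain R where R: "R \<in> carrier_mat n n" "Ci * K = R" "R * A0 = A0 * R"
    using key_comm[OF n th, of ahat] by (auto simp: Ci_def C_def A0_def c0_def K_def)
  have Kc: "K \<in> carrier_mat n n" by (simp add: K_def ctrb_mat_def)
  have L: "L \<in> carrier_mat n n" by (simp add: L_def)
  have Ab: "A0 *\<^sub>v b \<in> carrier_vec n" using A b by simp
  have LA: "L *\<^sub>v (transpose_mat A0 *\<^sub>v th) = Lmat n A0 (A0 *\<^sub>v b) *\<^sub>v th"
  proof (rule eq_vecI)
    fix j assume "j < dim_vec (Lmat n A0 (A0 *\<^sub>v b) *\<^sub>v th)"
    then have j: "j < n" by (simp add: Lmat_def)
    have Ajb: "A0 ^\<^sub>m j *\<^sub>v b \<in> carrier_vec n" using A b by (auto intro!: mult_mat_vec_carrier[of _ n n])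
    have pj: "A0 ^\<^sub>m j *\<^sub>v (A0 *\<^sub>v b) = A0 *\<^sub>v (A0 ^\<^sub>m j *\<^sub>v b)"
    proof -
      have "A0 ^\<^sub>m j *\<^sub>v (A0 *\<^sub>v b) = (A0 ^\<^sub>m j * A0) *\<^sub>v b"
        using assoc_mult_mat_vec[of "A0 ^\<^sub>m j" n n A0 n b] A b by simp
      also have "\<dots> = (A0 * A0 ^\<^sub>m j) *\<^sub>v b" using pow_comm[OF A] by simp
      also have "\<dots> = A0 *\<^sub>v (A0 ^\<^sub>m j *\<^sub>v b)"
        using assoc_mult_mat_vec[of A0 n n "A0 ^\<^sub>m j" n b] A b by simp
      finally show ?thesis .
    qed
    have "(L *\<^sub>v (transpose_mat A0 *\<^sub>v th)) $ j = (A0 ^\<^sub>m j *\<^sub>v b) \<bullet> (transpose_mat A0 *\<^sub>v th)"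
      using j A th b by (simp add: L_def Lmat_def scalar_prod_def atLeast0LessThan)
    also have "\<dots> = (transpose_mat A0 *\<^sub>v th) \<bullet> (A0 ^\<^sub>m j *\<^sub>v b)"
      using A th Ajb by (intro comm_scalar_prod[of _ n]) auto
    also have "\<dots> = (A0 *\<^sub>v (A0 ^\<^sub>m j *\<^sub>v b)) \<bullet> th" using TS[OF A th Ajb] .
    also have "\<dots> = (Lmat n A0 (A0 *\<^sub>v b) *\<^sub>v th) $ j"
      using j A th b pj by (simp add: Lmat_def scalar_prod_def atLeast0LessThan)
    finally show "(L *\<^sub>v (transpose_mat A0 *\<^sub>v th)) $ j = (Lmat n A0 (A0 *\<^sub>v b) *\<^sub>v th) $ j" .
  qed (simp add: L_def Lmat_def)
  have LC: "L *\<^sub>v c0 = C *\<^sub>v b"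
  proof (rule eq_vecI)
    fix j assume "j < dim_vec (C *\<^sub>v b)"
    then have j: "j < n" using Cc by simp
    have rowC: "row C j = transpose_mat (A0 ^\<^sub>m j) *\<^sub>v c0"
    proof (rule eq_vecI)
      fix m assume "m < dim_vec (transpose_mat (A0 ^\<^sub>m j) *\<^sub>v c0)"
      then have m: "m < n" using A by (simp split: if_splits)
      show "row C j $ m = (transpose_mat (A0 ^\<^sub>m j) *\<^sub>v c0) $ m"
        using j m A c by (simp add: C_def obsv_mat_def comm_scalar_prod[of _ n])
    qed (use Cc A in simp)
    have Ajb: "A0 ^\<^sub>m j *\<^sub>v b \<in> carrier_vec n" using A b by (auto intro!: mult_mat_vec_carrier[of _ n n])
    have "(L *\<^sub>v c0) $ j = (A0 ^\<^sub>m j *\<^sub>v b) \<bullet> c0"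
      using j A c b by (simp add: L_def Lmat_def scalar_prod_def atLeast0LessThan)
    also have "\<dots> = (transpose_mat (A0 ^\<^sub>m j) *\<^sub>v c0) \<bullet> b"
      using TS[of "A0 ^\<^sub>m j" n c0 b] A c b by (simp add: comm_scalar_prod[OF Ajb c])
    also have "\<dots> = (C *\<^sub>v b) $ j" using j Cc rowC by simp
    finally show "(L *\<^sub>v c0) $ j = (C *\<^sub>v b) $ j" .
  qed (use Cc L in simp)
  have "(Ci * L) *\<^sub>v (transpose_mat A0 *\<^sub>v th + yv \<cdot>\<^sub>v c0)
      = Ci *\<^sub>v (L *\<^sub>v (transpose_mat A0 *\<^sub>v th)) + Ci *\<^sub>v (L *\<^sub>v (yv \<cdot>\<^sub>v c0))"
    using Ci L A th c by (simp add: mult_add_distrib_mat_vec[of _ n n])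
  also have "Ci *\<^sub>v (L *\<^sub>v (transpose_mat A0 *\<^sub>v th)) = A0 *\<^sub>v ((Ci * K) *\<^sub>v b)"
  proof -
    have "Ci *\<^sub>v (L *\<^sub>v (transpose_mat A0 *\<^sub>v th)) = Ci *\<^sub>v (K *\<^sub>v (A0 *\<^sub>v b))"
      unfolding LA K_def using LIN[OF A th Ab] by simp
    also have "\<dots> = R *\<^sub>v (A0 *\<^sub>v b)" using R Ci Kc Ab by (simp flip: assoc_mult_mat_vec)
    also have "\<dots> = (R * A0) *\<^sub>v b" by (rule assoc_mult_mat_vec[symmetric]) (use R A b in auto)
    also have "\<dots> = (A0 * R) *\<^sub>v b" by (simp only: R(3))
    also have "\<dots> = A0 *\<^sub>v (R *\<^sub>v b)" by (rule assoc_mult_mat_vec) (use R A b in auto)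
    finally show ?thesis using R by simp
  qed
  also have "Ci *\<^sub>v (L *\<^sub>v (yv \<cdot>\<^sub>v c0)) = yv \<cdot>\<^sub>v b"
  proof -
    have "Ci *\<^sub>v (L *\<^sub>v (yv \<cdot>\<^sub>v c0)) = yv \<cdot>\<^sub>v (Ci *\<^sub>v (C *\<^sub>v b))"
      using Ci L c Cc b LC by (simp add: mult_mat_vec[of _ n n])
    also have "\<dots> = yv \<cdot>\<^sub>v b" using Ci Cc b by (simp flip: assoc_mult_mat_vec)
    finally show ?thesis .
  qed
  finally show ?thesis by (simp add: A0_def c0_def C_def Ci_def L_def K_def)
qed

lemma DER:
  fixes M :: "real mat"
  assumes M: "M \<in> carrier_mat n n" and v: "\<And>s. s \<ge> 0 \<Longrightarrow> v s \<in> carrier_vec n"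
    and t: "t \<ge> 0" and d: "d \<in> carrier_vec n"
    and dv: "\<And>m. m < n \<Longrightarrow> ((\<lambda>s. v s $ m) has_real_derivative d $ m) (at t within {0..})"
    and i: "i < n"
  shows "((\<lambda>s. (M *\<^sub>v v s) $ i) has_real_derivative (M *\<^sub>v d) $ i) (at t within {0..})"
proof -
  have D1: "((\<lambda>s. \<Sum>m<n. M $$ (i, m) * v s $ m) has_real_derivative (\<Sum>m<n. M $$ (i, m) * d $ m)) (at t within {0..})"
    by (intro DERIV_sum DERIV_cmult dv) auto
  have eq: "(\<Sum>m<n. M $$ (i, m) * v x $ m) = (M *\<^sub>v v x) $ i" if "x \<in> {0..}" "dist x t < 1" for x
    using M v[of x] i that by (simp add: scalar_prod_def atLeast0LessThan)
  have "((\<lambda>s. (M *\<^sub>v v s) $ i) has_real_derivative (\<Sum>m<n. M $$ (i, m) * d $ m)) (at t within {0..})"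
    by (rule has_field_derivative_transform_within[OF D1 _ _ eq]) (use t in auto)
  moreover have "(\<Sum>m<n. M $$ (i, m) * d $ m) = (M *\<^sub>v d) $ i"
    using M d i by (simp add: scalar_prod_def atLeast0LessThan)
  ultimately show ?thesis by simp
qed

theorem lemma1:
  fixes n :: nat and ahat :: "nat \<Rightarrow> real"
    and b_y b_u :: "real vec"
    and x th_y th_u :: "real \<Rightarrow> real vec"
    and u y :: "real \<Rightarrow> real"
  defines "A0 \<equiv> obs_canon n ahat"
    and "c0 \<equiv> c0_vec n"
  assumes n: "n \<ge> 1"
    and hur: "hurwitz A0"
    and by_dim: "b_y \<in> carrier_vec n" and bu_dim: "b_u \<in> carrier_vec n"
    and x_dim: "\<forall>t\<ge>0. x t \<in> carrier_vec n"
    and thy_dim: "\<forall>t\<ge>0. th_y t \<in> carrier_vec n"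
    and thu_dim: "\<forall>t\<ge>0. th_u t \<in> carrier_vec n"
    and y_def: "\<forall>t\<ge>0. y t = c0 \<bullet> x t"
    and x_ode: "\<forall>t\<ge>0. \<forall>i<n. ((\<lambda>s. x s $ i) has_real_derivative
        (A0 *\<^sub>v x t + y t \<cdot>\<^sub>v b_y + u t \<cdot>\<^sub>v b_u) $ i) (at t within {0..})"
    and thy_ode: "\<forall>t\<ge>0. \<forall>i<n. ((\<lambda>s. th_y s $ i) has_real_derivative
        (transpose_mat A0 *\<^sub>v th_y t + y t \<cdot>\<^sub>v c0) $ i) (at t within {0..})"
    and thu_ode: "\<forall>t\<ge>0. \<forall>i<n. ((\<lambda>s. th_u s $ i) has_real_derivative
        (transpose_mat A0 *\<^sub>v th_u t + u t \<cdot>\<^sub>v c0) $ i) (at t within {0..})"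
  shows "\<exists>M \<alpha>. \<alpha> > 0 \<and> (\<forall>t\<ge>0. \<forall>i<n.
     \<bar>((mat_inv (obsv_mat n c0 A0) * transpose_mat (ctrb_mat n (transpose_mat A0) (th_y t))) *\<^sub>v b_y
      + (mat_inv (obsv_mat n c0 A0) * transpose_mat (ctrb_mat n (transpose_mat A0) (th_u t))) *\<^sub>v b_u
      - x t) $ i\<bar> \<le> M * exp (- \<alpha> * t))"
proof -
  define Ci where "Ci = mat_inv (obsv_mat n c0 A0)"
  define Ky where "Ky t = transpose_mat (ctrb_mat n (transpose_mat A0) (th_y t))" for t
  define Ku where "Ku t = transpose_mat (ctrb_mat n (transpose_mat A0) (th_u t))" for t
  define e where "e t = (Ci * Ky t) *\<^sub>v b_y + (Ci * Ku t) *\<^sub>v b_u - x t" for t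
  define Ly where "Ly = Lmat n A0 b_y"
  define Lu where "Lu = Lmat n A0 b_u"
  have A: "A0 \<in> carrier_mat n n" by (simp add: A0_def A0_carrier)
  have c: "c0 \<in> carrier_vec n" by (simp add: c0_def c0_carrier)
  have Ci: "Ci \<in> carrier_mat n n" "obsv_mat n c0 A0 * Ci = 1\<^sub>m n" "Ci * obsv_mat n c0 A0 = 1\<^sub>m n"
    using obsv_inv[OF n, of ahat] by (auto simp: Ci_def A0_def c0_def)
  have Kyc: "Ky t \<in> carrier_mat n n" "Ku t \<in> carrier_mat n n" for t by (auto simp: Ky_def Ku_def ctrb_mat_def)
  have CLy: "Ci * Ly \<in> carrier_mat n n" and CLu: "Ci * Lu \<in> carrier_mat n n"
    using Ci by (auto simp: Ly_def Lu_def)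
  have zc: "(Ci * Ky t) *\<^sub>v b_y \<in> carrier_vec n" "(Ci * Ku t) *\<^sub>v b_u \<in> carrier_vec n" for t
    using mult_mat_vec_carrier[OF mult_carrier_mat[OF Ci(1) Kyc(1)] by_dim]
      mult_mat_vec_carrier[OF mult_carrier_mat[OF Ci(1) Kyc(2)] bu_dim] by auto
  have zeq: "(Ci * Ky s) *\<^sub>v b_y = (Ci * Ly) *\<^sub>v th_y s" "(Ci * Ku s) *\<^sub>v b_u = (Ci * Lu) *\<^sub>v th_u s"
    if s: "s \<ge> 0" for s
  proof -
    have "(Ci * Ky s) *\<^sub>v b_y = Ci *\<^sub>v (Ky s *\<^sub>v b_y)" by (rule assoc_mult_mat_vec) (use Ci Kyc by_dim in auto)
    also have "\<dots> = Ci *\<^sub>v (Ly *\<^sub>v th_y s)"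
      unfolding Ky_def Ly_def using LIN[OF A _ by_dim] thy_dim s by simp
    also have "\<dots> = (Ci * Ly) *\<^sub>v th_y s" by (rule assoc_mult_mat_vec[symmetric]) (use Ci thy_dim s in \<open>auto simp: Ly_def\<close>)
    finally show "(Ci * Ky s) *\<^sub>v b_y = (Ci * Ly) *\<^sub>v th_y s" .
    have "(Ci * Ku s) *\<^sub>v b_u = Ci *\<^sub>v (Ku s *\<^sub>v b_u)" by (rule assoc_mult_mat_vec) (use Ci Kyc bu_dim in auto)
    also have "\<dots> = Ci *\<^sub>v (Lu *\<^sub>v th_u s)"
      unfolding Ku_def Lu_def using LIN[OF A _ bu_dim] thu_dim s by simp
    also have "\<dots> = (Ci * Lu) *\<^sub>v th_u s" by (rule assoc_mult_mat_vec[symmetric]) (use Ci thu_dim s in \<open>auto simp: Lu_def\<close>)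
    finally show "(Ci * Ku s) *\<^sub>v b_u = (Ci * Lu) *\<^sub>v th_u s" .
  qed
  have ecar: "e t \<in> carrier_vec n" if "t \<ge> 0" for t
    unfolding e_def using that zc x_dim by (intro minus_carrier_vec add_carrier_vec) auto
  have eeq: "e s $ i = ((Ci * Ly) *\<^sub>v th_y s) $ i + ((Ci * Lu) *\<^sub>v th_u s) $ i - x s $ i"
    if "s \<ge> 0" "i < n" for s i
    using that zc[of s, THEN carrier_vecD] x_dim[rule_format, OF that(1), THEN carrier_vecD]
    by (simp add: e_def zeq[OF that(1), symmetric])
  have ed: "((\<lambda>s. e s $ i) has_real_derivative (A0 *\<^sub>v e t) $ i) (at t within {0..})"
    if t: "t \<ge> 0" and i: "i < n" for t i
  proof -
    define dy where "dy = transpose_mat A0 *\<^sub>v th_y t + y t \<cdot>\<^sub>v c0"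
    define du where "du = transpose_mat A0 *\<^sub>v th_u t + u t \<cdot>\<^sub>v c0"
    define dx where "dx = A0 *\<^sub>v x t + y t \<cdot>\<^sub>v b_y + u t \<cdot>\<^sub>v b_u"
    have dyc: "dy \<in> carrier_vec n" using A c thy_dim t by (simp add: dy_def)
    have duc: "du \<in> carrier_vec n" using A c thu_dim t by (simp add: du_def)
    have D1: "((\<lambda>s. ((Ci * Ly) *\<^sub>v th_y s) $ i) has_real_derivative ((Ci * Ly) *\<^sub>v dy) $ i) (at t within {0..})"
      by (rule DER[OF CLy _ t dyc _ i]) (use thy_dim thy_ode t in \<open>auto simp: dy_def\<close>)
    have D2: "((\<lambda>s. ((Ci * Lu) *\<^sub>v th_u s) $ i) has_real_derivative ((Ci * Lu) *\<^sub>v du) $ i) (at t within {0..})"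
      by (rule DER[OF CLu _ t duc _ i]) (use thu_dim thu_ode t in \<open>auto simp: du_def\<close>)
    have D3: "((\<lambda>s. x s $ i) has_real_derivative dx $ i) (at t within {0..})"
      using x_ode t i by (simp add: dx_def)
    have D: "((\<lambda>s. ((Ci * Ly) *\<^sub>v th_y s) $ i + ((Ci * Lu) *\<^sub>v th_u s) $ i - x s $ i) has_real_derivative
        ((Ci * Ly) *\<^sub>v dy) $ i + ((Ci * Lu) *\<^sub>v du) $ i - dx $ i) (at t within {0..})"
      by (intro DERIV_add DERIV_diff D1 D2 D3)
    have D': "((\<lambda>s. e s $ i) has_real_derivative
        ((Ci * Ly) *\<^sub>v dy) $ i + ((Ci * Lu) *\<^sub>v du) $ i - dx $ i) (at t within {0..})"
      by (rule has_field_derivative_transform_within[OF D, where d=1]) (use t eeq i in auto)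
    have V1: "(Ci * Ly) *\<^sub>v dy = A0 *\<^sub>v ((Ci * Ky t) *\<^sub>v b_y) + y t \<cdot>\<^sub>v b_y"
      using VEC[OF n thy_dim[rule_format, OF t] by_dim, of ahat "y t"]
      by (simp add: dy_def Ci_def Ly_def Ky_def A0_def c0_def)
    have V2: "(Ci * Lu) *\<^sub>v du = A0 *\<^sub>v ((Ci * Ku t) *\<^sub>v b_u) + u t \<cdot>\<^sub>v b_u"
      using VEC[OF n thu_dim[rule_format, OF t] bu_dim, of ahat "u t"]
      by (simp add: du_def Ci_def Lu_def Ku_def A0_def c0_def)
    have zyc: "(Ci * Ky t) *\<^sub>v b_y \<in> carrier_vec n" and zuc: "(Ci * Ku t) *\<^sub>v b_u \<in> carrier_vec n"
      using zc by auto
    have xc: "x t \<in> carrier_vec n" using x_dim t by simp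
    have Ae: "A0 *\<^sub>v e t = A0 *\<^sub>v ((Ci * Ky t) *\<^sub>v b_y) + A0 *\<^sub>v ((Ci * Ku t) *\<^sub>v b_u) - A0 *\<^sub>v x t"
      unfolding e_def using A zyc zuc xc
      by (simp add: mult_minus_distrib_mat_vec[of _ n n] mult_add_distrib_mat_vec[of _ n n])
    have "((Ci * Ly) *\<^sub>v dy) $ i + ((Ci * Lu) *\<^sub>v du) $ i - dx $ i = (A0 *\<^sub>v e t) $ i"
      unfolding V1 V2 Ae dx_def using i A zyc zuc xc by_dim bu_dim by simp
    with D' show ?thesis by simp
  qed
  obtain M \<alpha> where "\<alpha> > 0" "\<forall>t\<ge>0. \<forall>i<n. \<bar>e t $ i\<bar> \<le> M * exp (- \<alpha> * t)"
    using hurwitz_stable[OF A hur ecar ed] by blast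
  then show ?thesis unfolding e_def Ci_def Ky_def Ku_def by blast
qed

end
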